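(* Fix $m\ge1$. For every constant $c>0$, \[\limsup_{n\to\infty}\left\|OST_{m,n}^{\,n\log n+cn}-U_{m,n}\right\|_{Sep}\le e^{-c}.\]
   Context: Let $\xi$ be a primitive $m$-th root of unity and $[n]=\{1,\dots,n\}$. The generalized symmetric group $G_{m,n}$ (order $m^nn!$) is the set of tuples $(\xi^{k_1},\dots,\xi^{k_n},\sigma)$ with $k_i\in\mathbb{Z}_m$, $\sigma\in S_n$, with multiplication $(\xi^{k_1},\dots,\xi^{k_n},\sigma)(\xi^{k_1'},\dots,\xi^{k_n'},\sigma')=(\xi^{k_1}\xi^{k'_{\sigma(1)}},\dots,\xi^{k_n}\xi^{k'_{\sigma(n)}},\sigma\sigma')$. For $1\le i\le j\le n$, $k\in\mathbb{Z}_m$, let $g_{i,j,k}$ have permutation part the transposition $(ij)$ (identity if $i=j$) and tuple with $\xi^k$ in positions $i$ and $j$ and $1$ elsewhere. $OST_{m,n}$ is the law of $g_{i,j,k}$ with $j$ uniform on $[n]$, then $i$ uniform on $[j]$, $k$ uniform on $\mathbb{Z}_m$ independently (probability $\frac{1}{njm}$ per triple). $OST^t_{m,n}$ is its $t$-fold convolution power (exponents understood as integers). $U_{m,n}$ is the uniform distribution on $G_{m,n}$, and the separation distance is $\|P-U\|_{Sep}=1-\min_{g\in G_{m,n}}P(g)/U(g)$. *)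

theory Defs
  imports "HOL-Analysis.Analysis" "HOL-Combinatorics.Transposition" "HOL-Combinatorics.Permutations"
begin

text \<open>Elements of the generalized symmetric group G(m,n) are encoded as pairs (k, sigma):
  k i in {0..<m} is the exponent of xi in position i (for i in {1..n}, and 0 outside),
  sigma permutes {1..n}.\<close>

definition gsym :: "nat \<Rightarrow> nat \<Rightarrow> ((nat \<Rightarrow> nat) \<times> (nat \<Rightarrow> nat)) set" where
  "gsym m n = {(k, \<sigma>). (\<forall>i\<in>{1..n}. k i < m) \<and> (\<forall>i. i \<notin> {1..n} \<longrightarrow> k i = 0)
                        \<and> \<sigma> permutes {1..n}}"

definition gmult :: "nat \<Rightarrow> nat \<Rightarrow> ((nat \<Rightarrow> nat) \<times> (nat \<Rightarrow> nat)) \<Rightarrow>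
    ((nat \<Rightarrow> nat) \<times> (nat \<Rightarrow> nat)) \<Rightarrow> ((nat \<Rightarrow> nat) \<times> (nat \<Rightarrow> nat))" where
  "gmult m n x y = ((\<lambda>i. if i \<in> {1..n} then (fst x i + fst y (snd x i)) mod m else 0),
                    snd x \<circ> snd y)"

definition gunit :: "(nat \<Rightarrow> nat) \<times> (nat \<Rightarrow> nat)" where
  "gunit = ((\<lambda>_. 0), id)"

definition ggen :: "nat \<Rightarrow> nat \<Rightarrow> nat \<Rightarrow> (nat \<Rightarrow> nat) \<times> (nat \<Rightarrow> nat)" where
  "ggen i j k = ((\<lambda>l. if l = i \<or> l = j then k else 0), Transposition.transpose i j)"

definition OST :: "nat \<Rightarrow> nat \<Rightarrow> (nat \<Rightarrow> nat) \<times> (nat \<Rightarrow> nat) \<Rightarrow> real" where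
  "OST m n g = (\<Sum>j\<in>{1..n}. \<Sum>i\<in>{1..j}. \<Sum>k\<in>{0..<m}.
                  if g = ggen i j k then 1 / (real n * real j * real m) else 0)"

definition gconv :: "nat \<Rightarrow> nat \<Rightarrow> ((nat \<Rightarrow> nat) \<times> (nat \<Rightarrow> nat) \<Rightarrow> real) \<Rightarrow>
    ((nat \<Rightarrow> nat) \<times> (nat \<Rightarrow> nat) \<Rightarrow> real) \<Rightarrow> (nat \<Rightarrow> nat) \<times> (nat \<Rightarrow> nat) \<Rightarrow> real" where
  "gconv m n P Q g = (\<Sum>a\<in>gsym m n. \<Sum>b\<in>gsym m n. if gmult m n a b = g then P a * Q b else 0)"

fun gconv_pow :: "nat \<Rightarrow> nat \<Rightarrow> ((nat \<Rightarrow> nat) \<times> (nat \<Rightarrow> nat) \<Rightarrow> real) \<Rightarrow> nat \<Rightarrow>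
    (nat \<Rightarrow> nat) \<times> (nat \<Rightarrow> nat) \<Rightarrow> real" where
  "gconv_pow m n P 0 = (\<lambda>g. if g = gunit then 1 else 0)"
| "gconv_pow m n P (Suc t) = gconv m n (gconv_pow m n P t) P"

definition Unif :: "nat \<Rightarrow> nat \<Rightarrow> (nat \<Rightarrow> nat) \<times> (nat \<Rightarrow> nat) \<Rightarrow> real" where
  "Unif m n g = 1 / real (card (gsym m n))"

definition sep_dist :: "nat \<Rightarrow> nat \<Rightarrow> ((nat \<Rightarrow> nat) \<times> (nat \<Rightarrow> nat) \<Rightarrow> real) \<Rightarrow> real" where
  "sep_dist m n P = 1 - Min ((\<lambda>g. P g / Unif m n g) ` gsym m n)"

end

theory Submission
  imports Defs
begin

type_synonym st = "(nat \<Rightarrow> nat) \<times> (nat \<Rightarrow> nat)"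

definition Vt :: "nat \<Rightarrow> nat \<Rightarrow> (nat \<Rightarrow> nat) set" where
  "Vt m n = {k. (\<forall>i\<in>{1..n}. k i < m) \<and> (\<forall>i. i \<notin> {1..n} \<longrightarrow> k i = 0)}"

definition Perms :: "nat \<Rightarrow> (nat \<Rightarrow> nat) set" where
  "Perms n = {\<sigma>. \<sigma> permutes {1..n}}"

lemma gsym_eq: "gsym m n = Vt m n \<times> Perms n"
  unfolding gsym_def Vt_def Perms_def by auto

lemma finite_Vt: "finite (Vt m n)"
proof -
  have "Vt m n = {f. \<forall>x. (x \<in> {1..n} \<longrightarrow> f x \<in> {0..<m}) \<and> (x \<notin> {1..n} \<longrightarrow> f x = 0)}"
    unfolding Vt_def by auto
  then show ?thesis using finite_set_of_finite_funs[of "{1..n}" "{0..<m}" 0] by simp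
qed

lemma finite_Perms: "finite (Perms n)"
  unfolding Perms_def using finite_permutations[of "{1..n}"] by simp

lemma finite_gsym: "finite (gsym m n)"
  unfolding gsym_eq using finite_Vt finite_Perms by simp

lemma gunit_in: "m \<ge> 1 \<Longrightarrow> gunit \<in> gsym m n"
  unfolding gunit_def gsym_def by (auto simp: permutes_id)

lemma ggen_in:
  assumes "1 \<le> i" "i \<le> j" "j \<le> n" "K < m"
  shows "ggen i j K \<in> gsym m n"
  unfolding ggen_def gsym_def using assms by (auto intro!: permutes_swap_id)

lemma gmult_in:
  assumes "a \<in> gsym m n" "b \<in> gsym m n" "m \<ge> 1"
  shows "gmult m n a b \<in> gsym m n"
  using assms unfolding gmult_def gsym_def by (auto intro: permutes_compose)

fun run :: "nat \<Rightarrow> nat \<Rightarrow> (nat \<times> nat \<times> nat) list \<Rightarrow> st" where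
  "run m n [] = gunit"
| "run m n ((i,j,K)#ts) = gmult m n (run m n ts) (ggen i j K)"

definition trs :: "nat \<Rightarrow> nat list \<Rightarrow> (nat \<times> nat \<times> nat) list set" where
  "trs m w = {ts. map (\<lambda>(i,j,K). j) ts = w \<and> (\<forall>(i,j,K)\<in>set ts. 1 \<le> i \<and> i \<le> j \<and> K < m)}"

lemma trs_Nil: "trs m [] = {[]}"
  unfolding trs_def by auto

lemma trs_Cons: "trs m (j#w) = (\<lambda>((i,K),ts). (i,j,K)#ts) ` (({1..j} \<times> {0..<m}) \<times> trs m w)"
proof (rule set_eqI)
  fix xs
  show "xs \<in> trs m (j#w) \<longleftrightarrow> xs \<in> (\<lambda>((i,K),ts). (i,j,K)#ts) ` (({1..j} \<times> {0..<m}) \<times> trs m w)"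
  proof
    assume "xs \<in> trs m (j#w)"
    then obtain i j' K ts where xs: "xs = (i,j',K)#ts" and "j' = j" and "map (\<lambda>(i,j,K). j) ts = w"
      and "1 \<le> i" "i \<le> j" "K < m" and "\<forall>(i,j,K)\<in>set ts. 1 \<le> i \<and> i \<le> j \<and> K < m"
      unfolding trs_def by (cases xs) auto
    then show "xs \<in> (\<lambda>((i,K),ts). (i,j,K)#ts) ` (({1..j} \<times> {0..<m}) \<times> trs m w)"
      unfolding trs_def by (auto intro!: image_eqI[where x="((i,K),ts)"])
  next
    assume "xs \<in> (\<lambda>((i,K),ts). (i,j,K)#ts) ` (({1..j} \<times> {0..<m}) \<times> trs m w)"
    then show "xs \<in> trs m (j#w)" unfolding trs_def by auto
  qed
qed

lemma finite_trs: "finite (trs m w)"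
proof (induction w)
  case Nil
  then show ?case by (simp add: trs_Nil)
next
  case (Cons j w)
  then show ?case by (simp add: trs_Cons)
qed

lemma sum_trs_Cons:
  "(\<Sum>ts\<in>trs m (j#w). f ts) = (\<Sum>i\<in>{1..j}. \<Sum>K\<in>{0..<m}. \<Sum>ts\<in>trs m w. f ((i,j,K)#ts))"
proof -
  have inj: "inj_on (\<lambda>((i,K),ts). (i,j,K)#ts) (({1..j} \<times> {0..<m}) \<times> trs m w)"
    by (auto simp: inj_on_def)
  have "(\<Sum>ts\<in>trs m (j#w). f ts) = (\<Sum>x\<in>({1..j} \<times> {0..<m}) \<times> trs m w. f ((\<lambda>((i,K),ts). (i,j,K)#ts) x))"
    unfolding trs_Cons by (rule sum.reindex[OF inj, unfolded comp_def])
  also have "\<dots> = (\<Sum>p\<in>{1..j} \<times> {0..<m}. \<Sum>ts\<in>trs m w. f ((fst p,j,snd p)#ts))"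
    by (subst sum.cartesian_product) (simp add: split_def)
  also have "\<dots> = (\<Sum>i\<in>{1..j}. \<Sum>K\<in>{0..<m}. \<Sum>ts\<in>trs m w. f ((i,j,K)#ts))"
    by (subst sum.cartesian_product) (simp add: split_def)
  finally show ?thesis .
qed

lemma run_in:
  assumes "ts \<in> trs m w" "set w \<subseteq> {1..n}" "m \<ge> 1"
  shows "run m n ts \<in> gsym m n"
  using assms
proof (induction ts arbitrary: w)
  case Nil
  then show ?case by (simp add: gunit_in)
next
  case (Cons x ts)
  obtain i j K where x: "x = (i,j,K)" by (cases x) auto
  from Cons.prems x have w: "w = j # map (\<lambda>(i,j,K). j) ts" and "1 \<le> i" "i \<le> j" "K < m"
    and "ts \<in> trs m (map (\<lambda>(i,j,K). j) ts)"
    unfolding trs_def by auto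
  moreover have "j \<le> n" using Cons.prems w by auto
  ultimately show ?case using Cons.IH[of "map (\<lambda>(i,j,K). j) ts"] Cons.prems x
    by (auto intro!: gmult_in ggen_in)
qed

definition W :: "nat \<Rightarrow> nat \<Rightarrow> nat list set" where
  "W n t = {w. set w \<subseteq> {1..n} \<and> length w = t}"

definition wtw :: "nat \<Rightarrow> nat \<Rightarrow> nat list \<Rightarrow> real" where
  "wtw n m w = prod_list (map (\<lambda>j. 1 / (real n * real j * real m)) w)"

lemma finite_W: "finite (W n t)"
  unfolding W_def by (rule finite_lists_length_eq) simp

lemma sum_W_Suc: "(\<Sum>w\<in>W n (Suc t). f w) = (\<Sum>j\<in>{1..n}. \<Sum>w\<in>W n t. f (j#w))"
proof -
  have eq: "W n (Suc t) = (\<lambda>(xs, x). x#xs) ` (W n t \<times> {1..n})"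
    unfolding W_def by (rule lists_length_Suc_eq)
  have inj: "inj_on (\<lambda>(xs, x). x#xs) (W n t \<times> {1..n})" by (auto simp: inj_on_def)
  have "(\<Sum>w\<in>W n (Suc t). f w) = (\<Sum>p\<in>W n t \<times> {1..n}. f (snd p # fst p))"
    unfolding eq by (subst sum.reindex[OF inj]) (simp add: split_def)
  also have "\<dots> = (\<Sum>w\<in>W n t. \<Sum>j\<in>{1..n}. f (j#w))"
    by (subst sum.cartesian_product) (simp add: split_def)
  also have "\<dots> = (\<Sum>j\<in>{1..n}. \<Sum>w\<in>W n t. f (j#w))"
    by (rule sum.swap)
  finally show ?thesis .
qed

lemma W_0: "W n 0 = {[]}"
  unfolding W_def by auto

lemma OST_expand:
  "OST m n b = (\<Sum>j\<in>{1..n}. \<Sum>i\<in>{1..j}. \<Sum>K\<in>{0..<m}.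
                  (if b = ggen i j K then 1 else 0) * (1 / (real n * real j * real m)))"
  unfolding OST_def by (intro sum.cong refl) auto

lemma swap4:
  "(\<Sum>b\<in>B. \<Sum>j\<in>J. \<Sum>i\<in>I j. \<Sum>K\<in>C. f b j i K) = (\<Sum>j\<in>J. \<Sum>i\<in>I j. \<Sum>K\<in>C. \<Sum>b\<in>B. f b j i K)"
proof -
  have "(\<Sum>b\<in>B. \<Sum>j\<in>J. \<Sum>i\<in>I j. \<Sum>K\<in>C. f b j i K) = (\<Sum>j\<in>J. \<Sum>b\<in>B. \<Sum>i\<in>I j. \<Sum>K\<in>C. f b j i K)"
    by (rule sum.swap)
  also have "\<dots> = (\<Sum>j\<in>J. \<Sum>i\<in>I j. \<Sum>b\<in>B. \<Sum>K\<in>C. f b j i K)"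
    by (intro sum.cong refl) (rule sum.swap)
  also have "\<dots> = (\<Sum>j\<in>J. \<Sum>i\<in>I j. \<Sum>K\<in>C. \<Sum>b\<in>B. f b j i K)"
    by (intro sum.cong refl) (rule sum.swap)
  finally show ?thesis .
qed

lemma step_sum:
  assumes "m \<ge> 1"
  shows "(\<Sum>a\<in>gsym m n. \<Sum>b\<in>gsym m n. if gmult m n a b = g then Q a * OST m n b else 0)
       = (\<Sum>j\<in>{1..n}. \<Sum>i\<in>{1..j}. \<Sum>K\<in>{0..<m}. (1 / (real n * real j * real m)) *
            (\<Sum>a\<in>gsym m n. if gmult m n a (ggen i j K) = g then Q a else 0))"
proof -
  have inner: "(\<Sum>b\<in>gsym m n. if gmult m n a b = g then Q a * OST m n b else 0)
     = (\<Sum>j\<in>{1..n}. \<Sum>i\<in>{1..j}. \<Sum>K\<in>{0..<m}. (1 / (real n * real j * real m)) *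
            (if gmult m n a (ggen i j K) = g then Q a else 0))" for a
  proof -
    have "(\<Sum>b\<in>gsym m n. if gmult m n a b = g then Q a * OST m n b else 0)
        = (\<Sum>b\<in>gsym m n. (if gmult m n a b = g then Q a else 0) * OST m n b)"
      by (intro sum.cong refl) auto
    also have "\<dots> = (\<Sum>b\<in>gsym m n. \<Sum>j\<in>{1..n}. \<Sum>i\<in>{1..j}. \<Sum>K\<in>{0..<m}.
         (1 / (real n * real j * real m)) * ((if gmult m n a b = g then Q a else 0) * (if b = ggen i j K then 1 else 0)))"
      unfolding OST_expand by (simp add: sum_distrib_left mult_ac)
    also have "\<dots> = (\<Sum>j\<in>{1..n}. \<Sum>i\<in>{1..j}. \<Sum>K\<in>{0..<m}. \<Sum>b\<in>gsym m n.
         (1 / (real n * real j * real m)) * ((if gmult m n a b = g then Q a else 0) * (if b = ggen i j K then 1 else 0)))"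
      by (rule swap4)
    also have "\<dots> = (\<Sum>j\<in>{1..n}. \<Sum>i\<in>{1..j}. \<Sum>K\<in>{0..<m}. (1 / (real n * real j * real m)) *
            (if gmult m n a (ggen i j K) = g then Q a else 0))"
    proof (intro sum.cong refl)
      fix j i K assume "j \<in> {1..n}" "i \<in> {1..j}" "K \<in> {0..<m}"
      then have gin: "ggen i j K \<in> gsym m n" by (auto intro!: ggen_in)
      have "(\<Sum>b\<in>gsym m n. (1 / (real n * real j * real m)) * ((if gmult m n a b = g then Q a else 0) * (if b = ggen i j K then 1 else 0)))
          = (\<Sum>b\<in>gsym m n. if ggen i j K = b then (1 / (real n * real j * real m)) * (if gmult m n a b = g then Q a else 0) else 0)"
        by (intro sum.cong refl) auto
      also have "\<dots> = (1 / (real n * real j * real m)) * (if gmult m n a (ggen i j K) = g then Q a else 0)"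
        using gin finite_gsym by (simp add: sum.delta)
      finally show "(\<Sum>b\<in>gsym m n. (1 / (real n * real j * real m)) * ((if gmult m n a b = g then Q a else 0) * (if b = ggen i j K then 1 else 0)))
          = (1 / (real n * real j * real m)) * (if gmult m n a (ggen i j K) = g then Q a else 0)" .
    qed
    finally show ?thesis .
  qed
  show ?thesis
    unfolding inner swap4 by (simp add: sum_distrib_left)
qed

lemma inner_a:
  assumes "m \<ge> 1"
  shows "(\<Sum>a\<in>gsym m n. if gmult m n a x = g then
            (\<Sum>w\<in>W n t. wtw n m w * (\<Sum>ts\<in>trs m w. if run m n ts = a then 1 else 0)) else 0)
       = (\<Sum>w\<in>W n t. wtw n m w * (\<Sum>ts\<in>trs m w. if gmult m n (run m n ts) x = g then 1 else 0))"
proof -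
  have "(\<Sum>a\<in>gsym m n. if gmult m n a x = g then
            (\<Sum>w\<in>W n t. wtw n m w * (\<Sum>ts\<in>trs m w. if run m n ts = a then 1 else 0)) else 0)
      = (\<Sum>a\<in>gsym m n. \<Sum>w\<in>W n t. wtw n m w * (\<Sum>ts\<in>trs m w. if run m n ts = a \<and> gmult m n a x = g then 1 else 0))"
    by (intro sum.cong refl) (auto simp: if_distrib)
  also have "\<dots> = (\<Sum>w\<in>W n t. wtw n m w * (\<Sum>ts\<in>trs m w. \<Sum>a\<in>gsym m n. if run m n ts = a \<and> gmult m n a x = g then 1 else 0))"
    by (subst sum.swap) (simp add: sum_distrib_left sum.swap[of _ "gsym m n"])
  also have "\<dots> = (\<Sum>w\<in>W n t. wtw n m w * (\<Sum>ts\<in>trs m w. if gmult m n (run m n ts) x = g then 1 else 0))"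
  proof (intro sum.cong refl arg_cong2[where f="(*)"])
    fix w ts assume w: "w \<in> W n t" and ts: "ts \<in> trs m w"
    have rin: "run m n ts \<in> gsym m n" using run_in[OF ts _ assms] w unfolding W_def by auto
    have "(\<Sum>a\<in>gsym m n. if run m n ts = a \<and> gmult m n a x = g then 1 else (0::real))
        = (\<Sum>a\<in>gsym m n. if run m n ts = a then (if gmult m n a x = g then 1 else 0) else (0::real))"
      by (intro sum.cong refl) auto
    also have "\<dots> = (if gmult m n (run m n ts) x = g then 1 else 0)"
      using rin finite_gsym by (simp add: sum.delta)
    finally show "(\<Sum>a\<in>gsym m n. if run m n ts = a \<and> gmult m n a x = g then 1 else (0::real))
        = (if gmult m n (run m n ts) x = g then 1 else 0)" .
  qed
  finally show ?thesis .
qed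

lemma pow_traj:
  assumes "m \<ge> 1"
  shows "gconv_pow m n (OST m n) t g = (\<Sum>w\<in>W n t. wtw n m w * (\<Sum>ts\<in>trs m w. if run m n ts = g then 1 else 0))"
proof (induction t arbitrary: g)
  case 0
  then show ?case by (simp add: W_0 trs_Nil wtw_def)
next
  case (Suc t)
  have "gconv_pow m n (OST m n) (Suc t) g
      = (\<Sum>j\<in>{1..n}. \<Sum>i\<in>{1..j}. \<Sum>K\<in>{0..<m}. (1 / (real n * real j * real m)) *
            (\<Sum>a\<in>gsym m n. if gmult m n a (ggen i j K) = g then gconv_pow m n (OST m n) t a else 0))"
    by (simp add: gconv_def step_sum[OF assms])
  also have "\<dots> = (\<Sum>j\<in>{1..n}. \<Sum>i\<in>{1..j}. \<Sum>K\<in>{0..<m}. (1 / (real n * real j * real m)) *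
            (\<Sum>w\<in>W n t. wtw n m w * (\<Sum>ts\<in>trs m w. if run m n ((i,j,K)#ts) = g then 1 else 0)))"
    unfolding Suc.IH by (simp add: inner_a[OF assms])
  also have "\<dots> = (\<Sum>j\<in>{1..n}. \<Sum>w\<in>W n t. wtw n m (j#w) *
            (\<Sum>i\<in>{1..j}. \<Sum>K\<in>{0..<m}. \<Sum>ts\<in>trs m w. if run m n ((i,j,K)#ts) = g then 1 else 0))"
  proof (intro sum.cong refl)
    fix j assume "j \<in> {1..n}"
    show "(\<Sum>i\<in>{1..j}. \<Sum>K\<in>{0..<m}. (1 / (real n * real j * real m)) *
            (\<Sum>w\<in>W n t. wtw n m w * (\<Sum>ts\<in>trs m w. if run m n ((i,j,K)#ts) = g then 1 else 0)))
        = (\<Sum>w\<in>W n t. wtw n m (j#w) *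
            (\<Sum>i\<in>{1..j}. \<Sum>K\<in>{0..<m}. \<Sum>ts\<in>trs m w. if run m n ((i,j,K)#ts) = g then 1 else 0))"
      by (simp add: wtw_def sum_distrib_left sum_divide_distrib sum.swap[of _ "W n t"] mult_ac)
  qed
  also have "\<dots> = (\<Sum>w\<in>W n (Suc t). wtw n m w * (\<Sum>ts\<in>trs m w. if run m n ts = g then 1 else 0))"
    unfolding sum_W_Suc sum_trs_Cons ..
  finally show ?case .
qed

fun prm :: "(nat \<times> nat \<times> nat) list \<Rightarrow> nat \<Rightarrow> nat" where
  "prm [] = id"
| "prm ((i,j,K)#ts) = prm ts \<circ> Transposition.transpose i j"

lemma snd_run: "snd (run m n ts) = prm ts"
  by (induction ts rule: prm.induct) (auto simp: gunit_def gmult_def ggen_def)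

definition Kop :: "nat \<Rightarrow> nat \<Rightarrow> ((nat \<Rightarrow> nat) \<Rightarrow> nat) \<Rightarrow> ((nat \<Rightarrow> nat) \<Rightarrow> nat)" where
  "Kop m j f = (\<lambda>\<sigma>. \<Sum>i\<in>{1..j}. m * f (\<sigma> \<circ> Transposition.transpose i j))"

definition dlt :: "(nat \<Rightarrow> nat) \<Rightarrow> nat" where
  "dlt \<sigma> = (if \<sigma> = id then 1 else 0)"

definition cP :: "nat \<Rightarrow> nat list \<Rightarrow> (nat \<Rightarrow> nat) \<Rightarrow> nat" where
  "cP m w \<sigma> = (\<Sum>ts\<in>trs m w. if prm ts = \<sigma> then 1 else 0)"

lemma comp_transpose_iff: "(\<rho> \<circ> Transposition.transpose i j = \<sigma>) \<longleftrightarrow> (\<rho> = \<sigma> \<circ> Transposition.transpose i j)"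
proof
  assume "\<rho> \<circ> Transposition.transpose i j = \<sigma>"
  then have "\<sigma> \<circ> Transposition.transpose i j = \<rho> \<circ> (Transposition.transpose i j \<circ> Transposition.transpose i j)" by (auto simp: o_assoc)
  then show "\<rho> = \<sigma> \<circ> Transposition.transpose i j" by simp
next
  assume "\<rho> = \<sigma> \<circ> Transposition.transpose i j"
  then have "\<rho> \<circ> Transposition.transpose i j = \<sigma> \<circ> (Transposition.transpose i j \<circ> Transposition.transpose i j)" by (auto simp: o_assoc)
  then show "\<rho> \<circ> Transposition.transpose i j = \<sigma>" by simp
qed

lemma cP_foldr: "cP m w = foldr (Kop m) w dlt"
proof (induction w)
  case Nil
  show ?case by (auto simp: cP_def trs_Nil dlt_def fun_eq_iff)
next
  case (Cons j w)
  show ?case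
  proof
    fix \<sigma>
    have "cP m (j#w) \<sigma> = (\<Sum>i\<in>{1..j}. \<Sum>K\<in>{0..<m}. \<Sum>ts\<in>trs m w. if prm ts = \<sigma> \<circ> Transposition.transpose i j then 1 else 0)"
      unfolding cP_def sum_trs_Cons by (simp add: comp_transpose_iff)
    also have "\<dots> = Kop m j (cP m w) \<sigma>"
      unfolding Kop_def cP_def by simp
    finally show "cP m (j#w) \<sigma> = foldr (Kop m) (j#w) dlt \<sigma>" using Cons by simp
  qed
qed

lemma transpose_conj:
  assumes "b \<noteq> i" "b \<noteq> a"
  shows "Transposition.transpose i a \<circ> Transposition.transpose i' b = Transposition.transpose (Transposition.transpose i a i') b \<circ> Transposition.transpose i a"
  using assms by (auto simp: fun_eq_iff Transposition.transpose_def)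

lemma Kop_comm_lt:
  assumes "a < b"
  shows "Kop m a (Kop m b f) = Kop m b (Kop m a f)"
proof (rule ext)
  fix \<sigma>
  have "Kop m a (Kop m b f) \<sigma> = (\<Sum>i\<in>{1..a}. \<Sum>i'\<in>{1..b}. m * (m * f (\<sigma> \<circ> Transposition.transpose i a \<circ> Transposition.transpose i' b)))"
    unfolding Kop_def by (simp add: sum_distrib_left)
  also have "\<dots> = (\<Sum>i\<in>{1..a}. \<Sum>i'\<in>{1..b}. m * (m * f (\<sigma> \<circ> Transposition.transpose i' b \<circ> Transposition.transpose i a)))"
  proof (rule sum.cong[OF refl])
    fix i assume i: "i \<in> {1..a}"
    have bij: "bij_betw (Transposition.transpose i a) {1..b} {1..b}"
      using i assms by (intro permutes_imp_bij permutes_swap_id) auto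
    have "(\<Sum>i'\<in>{1..b}. m * (m * f (\<sigma> \<circ> Transposition.transpose i a \<circ> Transposition.transpose i' b)))
        = (\<Sum>i'\<in>{1..b}. m * (m * f (\<sigma> \<circ> Transposition.transpose (Transposition.transpose i a i') b \<circ> Transposition.transpose i a)))"
      using i assms by (intro sum.cong refl) (simp add: o_assoc[symmetric] transpose_conj)
    also have "\<dots> = (\<Sum>i'\<in>{1..b}. m * (m * f (\<sigma> \<circ> Transposition.transpose i' b \<circ> Transposition.transpose i a)))"
      by (rule sum.reindex_bij_betw[OF bij, where g="\<lambda>i'. m * (m * f (\<sigma> \<circ> Transposition.transpose i' b \<circ> Transposition.transpose i a))"])
    finally show "(\<Sum>i'\<in>{1..b}. m * (m * f (\<sigma> \<circ> Transposition.transpose i a \<circ> Transposition.transpose i' b)))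
        = (\<Sum>i'\<in>{1..b}. m * (m * f (\<sigma> \<circ> Transposition.transpose i' b \<circ> Transposition.transpose i a)))" .
  qed
  also have "\<dots> = (\<Sum>i'\<in>{1..b}. \<Sum>i\<in>{1..a}. m * (m * f (\<sigma> \<circ> Transposition.transpose i' b \<circ> Transposition.transpose i a)))"
    by (rule sum.swap)
  also have "\<dots> = Kop m b (Kop m a f) \<sigma>"
    unfolding Kop_def by (simp add: sum_distrib_left)
  finally show "Kop m a (Kop m b f) \<sigma> = Kop m b (Kop m a f) \<sigma>" .
qed

lemma Kop_comm: "Kop m a \<circ> Kop m b = Kop m b \<circ> Kop m a"
proof (rule ext)
  fix f
  show "(Kop m a \<circ> Kop m b) f = (Kop m b \<circ> Kop m a) f"
    using Kop_comm_lt[of a b m f] Kop_comm_lt[of b a m f]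
    by (cases a b rule: linorder_cases) auto
qed

lemma foldr_Kop_mset:
  assumes "mset w = mset w'"
  shows "foldr (Kop m) w = foldr (Kop m) w'"
proof -
  have "fold (Kop m) (rev w) = fold (Kop m) (rev w')"
    by (rule fold_multiset_equiv) (auto simp: Kop_comm assms)
  then show ?thesis by (simp add: foldr_conv_fold)
qed

lemma permutes_Suc_iff:
  "\<rho> permutes {1..l} \<longleftrightarrow> \<rho> permutes {1..Suc l} \<and> \<rho> (Suc l) = Suc l"
proof
  assume "\<rho> permutes {1..l}"
  then show "\<rho> permutes {1..Suc l} \<and> \<rho> (Suc l) = Suc l"
    by (auto intro: permutes_subset simp: permutes_not_in)
next
  assume a: "\<rho> permutes {1..Suc l} \<and> \<rho> (Suc l) = Suc l"
  then show "\<rho> permutes {1..l}"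
    unfolding permutes_def by (metis atLeastAtMost_iff le_Suc_eq)
qed

lemma perm_comp_transpose_iff:
  assumes "i \<in> S" "j \<in> S"
  shows "(\<sigma> \<circ> Transposition.transpose i j) permutes S \<longleftrightarrow> \<sigma> permutes S"
proof
  have t: "Transposition.transpose i j permutes S" using assms by (rule permutes_swap_id)
  assume a: "(\<sigma> \<circ> Transposition.transpose i j) permutes S"
  have "(\<sigma> \<circ> Transposition.transpose i j) \<circ> Transposition.transpose i j permutes S"
    by (rule permutes_compose[OF t a])
  then show "\<sigma> permutes S" by (simp add: o_assoc[symmetric])
next
  have t: "Transposition.transpose i j permutes S" using assms by (rule permutes_swap_id)
  assume "\<sigma> permutes S"
  then show "(\<sigma> \<circ> Transposition.transpose i j) permutes S"
    by (rule permutes_compose[OF t])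
qed

lemma FY: "foldr (Kop m) (rev [1..<Suc l]) dlt = (\<lambda>\<sigma>. if \<sigma> permutes {1..l} then m^l else 0)"
proof (induction l)
  case 0
  show ?case
  proof (rule ext)
    fix \<sigma> :: "nat \<Rightarrow> nat"
    have e: "{1..0::nat} = {}" by simp
    show "foldr (Kop m) (rev [1..<Suc 0]) dlt \<sigma> = (if \<sigma> permutes {1..0} then m^0 else 0)"
      unfolding e by (simp add: dlt_def)
  qed
next
  case (Suc l)
  show ?case
  proof (rule ext)
    fix \<sigma>
    have r: "rev [1..<Suc (Suc l)] = Suc l # rev [1..<Suc l]" by simp
    have "foldr (Kop m) (rev [1..<Suc (Suc l)]) dlt \<sigma>
        = (\<Sum>i\<in>{1..Suc l}. m * (if (\<sigma> \<circ> Transposition.transpose i (Suc l)) permutes {1..l} then m^l else 0))"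
      unfolding r foldr.simps o_apply Suc.IH Kop_def by (rule refl)
    also have "\<dots> = (if \<sigma> permutes {1..Suc l} then m^(Suc l) else 0)"
    proof (cases "\<sigma> permutes {1..Suc l}")
      case True
      have "(\<Sum>i\<in>{1..Suc l}. m * (if (\<sigma> \<circ> Transposition.transpose i (Suc l)) permutes {1..l} then m^l else 0))
          = (\<Sum>i\<in>{1..Suc l}. if inv \<sigma> (Suc l) = i then m * m^l else 0)"
      proof (rule sum.cong[OF refl])
        fix i assume i: "i \<in> {1..Suc l}"
        have sl: "Suc l \<in> {1..Suc l}" by simp
        have "(\<sigma> \<circ> Transposition.transpose i (Suc l)) permutes {1..l}
            \<longleftrightarrow> (\<sigma> \<circ> Transposition.transpose i (Suc l)) permutes {1..Suc l} \<and> (\<sigma> \<circ> Transposition.transpose i (Suc l)) (Suc l) = Suc l"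
          by (rule permutes_Suc_iff)
        also have "\<dots> \<longleftrightarrow> \<sigma> i = Suc l"
          using perm_comp_transpose_iff[OF i sl, of \<sigma>] True by simp
        also have "\<dots> \<longleftrightarrow> inv \<sigma> (Suc l) = i" using permutes_inv_eq[OF True] by metis
        finally have e: "(\<sigma> \<circ> Transposition.transpose i (Suc l)) permutes {1..l} \<longleftrightarrow> inv \<sigma> (Suc l) = i" .
        show "m * (if (\<sigma> \<circ> Transposition.transpose i (Suc l)) permutes {1..l} then m^l else 0)
            = (if inv \<sigma> (Suc l) = i then m * m^l else 0)" unfolding e by simp
      qed
      also have "\<dots> = m * m^l"
      proof -
        have "inv \<sigma> (Suc l) \<in> {1..Suc l}"
          using permutes_in_image[OF permutes_inv[OF True], of "Suc l"] by simp
        moreover have "(\<Sum>i\<in>{1..Suc l}. if inv \<sigma> (Suc l) = i then m * m^l else 0)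
            = (if inv \<sigma> (Suc l) \<in> {1..Suc l} then m * m^l else 0)"
          by (rule sum.delta'[OF finite_atLeastAtMost])
        ultimately show ?thesis by (simp only: if_True)
      qed
      finally show ?thesis using True by simp
    next
      case False
      have z: "\<not> (\<sigma> \<circ> Transposition.transpose i (Suc l)) permutes {1..l}" if i: "i \<in> {1..Suc l}" for i
      proof
        assume "(\<sigma> \<circ> Transposition.transpose i (Suc l)) permutes {1..l}"
        then have "(\<sigma> \<circ> Transposition.transpose i (Suc l)) permutes {1..Suc l}"
          using permutes_Suc_iff by blast
        then have "\<sigma> permutes {1..Suc l}"
          using perm_comp_transpose_iff[OF i, of "Suc l" \<sigma>] by simp
        then show False using False by contradiction
      qed
      have "(\<Sum>i\<in>{1..Suc l}. m * (if (\<sigma> \<circ> Transposition.transpose i (Suc l)) permutes {1..l} then m^l else 0)) = 0"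
      proof (rule sum.neutral, rule ballI)
        fix i assume "i \<in> {1..Suc l}"
        then show "m * (if (\<sigma> \<circ> Transposition.transpose i (Suc l)) permutes {1..l} then m^l else 0) = 0"
          using z[of i] by simp
      qed
      then show ?thesis using False by simp
    qed
    finally show "foldr (Kop m) (rev [1..<Suc (Suc l)]) dlt \<sigma> = (if \<sigma> permutes {1..Suc l} then m^(Suc l) else 0)" .
  qed
qed

lemma Kop_perm_const:
  assumes "1 \<le> j" "j \<le> n"
  shows "Kop m j (\<lambda>\<sigma>. if \<sigma> permutes {1..n} then C else 0) = (\<lambda>\<sigma>. if \<sigma> permutes {1..n} then j*m*C else 0)"
proof (rule ext)
  fix \<sigma>
  have "Kop m j (\<lambda>\<sigma>. if \<sigma> permutes {1..n} then C else 0) \<sigma> = (\<Sum>i\<in>{1..j}. if \<sigma> permutes {1..n} then m*C else 0)"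
    unfolding Kop_def using assms by (intro sum.cong refl) (auto simp: perm_comp_transpose_iff)
  then show "Kop m j (\<lambda>\<sigma>. if \<sigma> permutes {1..n} then C else 0) \<sigma> = (if \<sigma> permutes {1..n} then j*m*C else 0)"
    by simp
qed

lemma foldr_Kop_const:
  assumes "set ws \<subseteq> {1..n}"
  shows "\<exists>C'. foldr (Kop m) ws (\<lambda>\<sigma>. if \<sigma> permutes {1..n} then C else 0) = (\<lambda>\<sigma>. if \<sigma> permutes {1..n} then C' else 0)"
  using assms
proof (induction ws)
  case Nil
  then show ?case by auto
next
  case (Cons j ws)
  then obtain C' where "foldr (Kop m) ws (\<lambda>\<sigma>. if \<sigma> permutes {1..n} then C else 0) = (\<lambda>\<sigma>. if \<sigma> permutes {1..n} then C' else 0)"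
    by auto
  then have "foldr (Kop m) (j#ws) (\<lambda>\<sigma>. if \<sigma> permutes {1..n} then C else 0)
      = Kop m j (\<lambda>\<sigma>. if \<sigma> permutes {1..n} then C' else 0)" by simp
  also have "\<dots> = (\<lambda>\<sigma>. if \<sigma> permutes {1..n} then j*m*C' else 0)"
    using Cons.prems by (intro Kop_perm_const) auto
  finally show ?case by blast
qed

lemma cP_const:
  assumes "set w = {1..n}"
  shows "\<exists>C. \<forall>\<sigma>. \<sigma> permutes {1..n} \<longrightarrow> cP m w \<sigma> = C"
proof -
  define L where "L = rev [1..<Suc n]"
  have "mset L = mset_set {1..n}" unfolding L_def
    by (metis atLeastLessThanSuc_atLeastAtMost distinct_upt mset_rev mset_set_set set_upt)
  also have "\<dots> = mset_set (set_mset (mset w))" using assms by simp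
  also have "\<dots> \<subseteq># mset w" by (rule mset_set_set_mset_msubset)
  finally have sub: "mset L \<subseteq># mset w" .
  obtain rest where rest: "mset rest = mset w - mset L" using ex_mset by blast
  have mw: "mset w = mset (rest @ L)" using sub rest by simp
  have "set rest \<subseteq> set w"
    by (metis rest in_diffD set_mset_mset subsetI)
  then have srest: "set rest \<subseteq> {1..n}" using assms by simp
  have "cP m w = foldr (Kop m) (rest @ L) dlt"
    unfolding cP_foldr using foldr_Kop_mset[OF mw] by simp
  also have "\<dots> = foldr (Kop m) rest (\<lambda>\<sigma>. if \<sigma> permutes {1..n} then m^n else 0)"
    unfolding L_def foldr_append o_apply FY ..
  finally have eq: "cP m w = foldr (Kop m) rest (\<lambda>\<sigma>. if \<sigma> permutes {1..n} then m^n else 0)" .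
  obtain C' where "foldr (Kop m) rest (\<lambda>\<sigma>. if \<sigma> permutes {1..n} then m^n else 0) = (\<lambda>\<sigma>. if \<sigma> permutes {1..n} then C' else 0)"
    using foldr_Kop_const[OF srest] by blast
  then have "cP m w = (\<lambda>\<sigma>. if \<sigma> permutes {1..n} then C' else 0)" using eq by (simp only:)
  then show ?thesis by (intro exI[of _ C']) simp
qed

fun twI :: "(nat \<times> nat \<times> nat) list \<Rightarrow> nat \<Rightarrow> int" where
  "twI [] x = 0"
| "twI ((i,j,K)#ts) x = twI ts x + (if prm ts x = i \<or> prm ts x = j then int K else 0)"

lemma fst_run:
  assumes "m \<ge> 1"
  shows "fst (run m n ts) x = (if x \<in> {1..n} then nat (twI ts x mod int m) else 0)"
proof (induction ts arbitrary: x)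
  case Nil
  then show ?case by (simp add: gunit_def)
next
  case (Cons a ts)
  obtain i j K where a: "a = (i,j,K)" by (cases a) auto
  have sr: "snd (run m n ts) = prm ts" by (rule snd_run)
  show ?case
  proof (cases "x \<in> {1..n}")
    case True
    have "fst (run m n (a#ts)) x = (fst (run m n ts) x + fst (ggen i j K) (prm ts x)) mod m"
      using True a sr by (simp add: gmult_def)
    also have "\<dots> = (nat (twI ts x mod int m) + (if prm ts x = i \<or> prm ts x = j then K else 0)) mod m"
      using Cons.IH True by (simp add: ggen_def)
    also have "\<dots> = nat (twI (a#ts) x mod int m)"
    proof -
      have "int ((nat (twI ts x mod int m) + (if prm ts x = i \<or> prm ts x = j then K else 0)) mod m)
          = (twI ts x mod int m + int (if prm ts x = i \<or> prm ts x = j then K else 0)) mod int m"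
        using assms by (simp add: zmod_int of_nat_add)
      also have "\<dots> = (twI ts x + int (if prm ts x = i \<or> prm ts x = j then K else 0)) mod int m"
        by (simp add: mod_add_left_eq)
      also have "\<dots> = twI (a#ts) x mod int m" using a by (simp add: if_distrib)
      finally show ?thesis by (metis nat_int)
    qed
    finally show ?thesis using True by simp
  next
    case False
    have "fst (run m n (a#ts)) x = fst (gmult m n (run m n ts) (ggen i j K)) x" using a by simp
    also have "\<dots> = 0" unfolding gmult_def fst_conv using False by (rule if_not_P)
    also have "0 = (if x \<in> {1..n} then nat (twI (a#ts) x mod int m) else 0)"
      using False by (rule if_not_P[symmetric])
    finally show ?thesis .
  qed
qed

definition skel :: "(nat \<times> nat \<times> nat) list \<Rightarrow> (nat \<times> nat) list" where
  "skel ts = map (\<lambda>(i,j,K). (i,j)) ts"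

lemma skel_Cons [simp]: "skel ((i,j,K)#ts) = (i,j) # skel ts"
  by (simp add: skel_def)

lemma skel_Nil [simp]: "skel [] = []"
  by (simp add: skel_def)

lemma skel_Nil_iff: "skel ds = [] \<longleftrightarrow> ds = []"
  by (simp add: skel_def)

lemma skel_Cons_iff: "skel ds = (i,j) # p \<longleftrightarrow> (\<exists>K ds'. ds = (i,j,K)#ds' \<and> skel ds' = p)"
  by (cases ds) (auto simp: skel_def)

lemma prm_skel: "skel ds = skel ts \<Longrightarrow> prm ds = prm ts"
proof (induction ts arbitrary: ds)
  case Nil
  then show ?case by (simp add: skel_Nil_iff)
next
  case (Cons a ts)
  obtain i j K where a: "a = (i,j,K)" by (cases a) auto
  have "skel ds = (i,j) # skel ts" using Cons.prems a by simp
  then obtain K' ds' where d: "ds = (i,j,K')#ds'" "skel ds' = skel ts"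
    unfolding skel_Cons_iff by blast
  have "prm ds' = prm ts" using Cons.IH d(2) by blast
  then show ?case using d a by simp
qed

definition addK :: "nat \<Rightarrow> (nat \<times> nat \<times> nat) list \<Rightarrow> (nat \<times> nat \<times> nat) list \<Rightarrow> (nat \<times> nat \<times> nat) list" where
  "addK m ds es = map (\<lambda>((i,j,K),(_,_,K')). (i,j,(K+K') mod m)) (zip ds es)"

definition negK :: "nat \<Rightarrow> (nat \<times> nat \<times> nat) list \<Rightarrow> (nat \<times> nat \<times> nat) list" where
  "negK m ds = map (\<lambda>(i,j,K). (i,j,(m - K) mod m)) ds"

definition zeroK :: "(nat \<times> nat \<times> nat) list \<Rightarrow> (nat \<times> nat \<times> nat) list" where
  "zeroK ds = map (\<lambda>(i,j,K). (i,j,0)) ds"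

lemma addK_Cons [simp]: "addK m ((i,j,K)#ds) ((i',j',K')#es) = (i,j,(K+K') mod m) # addK m ds es"
  by (simp add: addK_def)

lemma addK_Nil [simp]: "addK m [] es = []"
  by (simp add: addK_def)

lemma skel_zeroK [simp]: "skel (zeroK ds) = skel ds"
  by (induction ds) (auto simp: zeroK_def skel_def)

lemma skel_negK [simp]: "skel (negK m ds) = skel ds"
  by (induction ds) (auto simp: negK_def skel_def)

lemma zeroK_Cons [simp]: "zeroK ((i,j,K)#ds) = (i,j,0) # zeroK ds"
  by (simp add: zeroK_def)

lemma negK_Cons [simp]: "negK m ((i,j,K)#ds) = (i,j,(m-K) mod m) # negK m ds"
  by (simp add: negK_def)

lemma twI_zeroK: "twI (zeroK ds) x = 0"
proof (induction ds)
  case Nil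
  then show ?case by (simp add: zeroK_def)
next
  case (Cons a ds)
  then show ?case by (cases a) auto
qed

lemma mod_step:
  fixes A B C D :: int
  assumes "A mod M = B mod M"
  shows "(A + C) mod M = (B + C) mod M"
  by (metis assms mod_add_left_eq)

lemma addK_props:
  assumes "skel ds = skel es"
  shows "skel (addK m ds es) = skel ds \<and> (\<forall>x. twI (addK m ds es) x mod int m = (twI ds x + twI es x) mod int m)"
  using assms
proof (induction ds arbitrary: es)
  case Nil
  then have "es = []" by (metis skel_Nil_iff)
  then show ?case by simp
next
  case (Cons a ds)
  obtain i j K where a: "a = (i,j,K)" by (cases a) auto
  have "skel es = (i,j) # skel ds" using Cons.prems a by simp
  then obtain K' es' where es: "es = (i,j,K')#es'" "skel es' = skel ds"
    unfolding skel_Cons_iff by blast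
  have IH: "skel (addK m ds es') = skel ds" "\<And>x. twI (addK m ds es') x mod int m = (twI ds x + twI es' x) mod int m"
    using Cons.IH[of es'] es by auto
  have pe: "prm (addK m ds es') = prm ds" "prm es' = prm ds"
    using prm_skel[OF IH(1)] prm_skel[OF es(2)] by simp_all
  have "twI (addK m (a#ds) es) x mod int m = (twI (a#ds) x + twI es x) mod int m" for x
  proof (cases "prm ds x = i \<or> prm ds x = j")
    case True
    have "twI (addK m (a#ds) es) x mod int m = (twI (addK m ds es') x + int ((K + K') mod m)) mod int m"
      using a es pe True by simp
    also have "\<dots> = (twI (addK m ds es') x + int (K + K')) mod int m"
      by (metis zmod_int mod_add_right_eq)
    also have "\<dots> = ((twI ds x + twI es' x) + int (K + K')) mod int m"
      by (rule mod_step[OF IH(2)])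
    also have "(twI ds x + twI es' x) + int (K + K') = (twI ds x + int K) + (twI es' x + int K')"
      by simp
    also have "(twI ds x + int K) + (twI es' x + int K') = twI (a#ds) x + twI es x"
      using a es pe True by simp
    finally show ?thesis .
  next
    case False
    have "twI (addK m (a#ds) es) x mod int m = twI (addK m ds es') x mod int m"
      using a es pe False by simp
    also have "\<dots> = (twI ds x + twI es' x) mod int m" by (rule IH(2))
    also have "twI ds x + twI es' x = twI (a#ds) x + twI es x"
      using a es pe False by simp
    finally show ?thesis .
  qed
  then show ?case using a es IH by simp
qed

lemma negK_props:
  assumes "\<forall>(i,j,K)\<in>set ds. K < m"
  shows "twI (negK m ds) x mod int m = (- twI ds x) mod int m"
  using assms
proof (induction ds)
  case Nil
  then show ?case by (simp add: negK_def)
next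
  case (Cons a ds)
  obtain i j K where a: "a = (i,j,K)" by (cases a) auto
  have pe: "prm (negK m ds) = prm ds" using prm_skel[OF skel_negK] by simp
  have Km: "K < m" using Cons.prems a by auto
  have IH: "twI (negK m ds) x mod int m = (- twI ds x) mod int m" using Cons by auto
  show ?case
  proof (cases "prm ds x = i \<or> prm ds x = j")
    case True
    have "twI (negK m (a#ds)) x mod int m = (twI (negK m ds) x + int ((m - K) mod m)) mod int m"
      using a pe True by simp
    also have "\<dots> = (twI (negK m ds) x + int (m - K)) mod int m"
      by (metis zmod_int mod_add_right_eq)
    also have "\<dots> = (- twI ds x + int (m - K)) mod int m"
      by (rule mod_step[OF IH])
    also have "- twI ds x + int (m - K) = (- twI ds x - int K) + int m"
      using Km by (simp add: of_nat_diff)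
    also have "((- twI ds x - int K) + int m) mod int m = (- twI ds x - int K) mod int m"
      by simp
    also have "- twI ds x - int K = - twI (a#ds) x"
      using a True by simp
    finally show ?thesis .
  next
    case False
    have "twI (negK m (a#ds)) x mod int m = twI (negK m ds) x mod int m"
      using a pe False by simp
    also have "\<dots> = (- twI ds x) mod int m" by (rule IH)
    also have "- twI ds x = - twI (a#ds) x"
      using a False by simp
    finally show ?thesis .
  qed
qed

definition ev :: "nat \<Rightarrow> nat \<Rightarrow> int" where
  "ev a = (\<lambda>x. if x = a then 1 else 0)"

definition closedA :: "(nat \<Rightarrow> int) set \<Rightarrow> bool" where
  "closedA A \<longleftrightarrow> (\<lambda>x. 0) \<in> A \<and> (\<forall>u\<in>A. \<forall>v\<in>A. (\<lambda>x. u x + v x) \<in> A) \<and> (\<forall>u\<in>A. (\<lambda>x. - u x) \<in> A)"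

definition rel :: "(nat \<Rightarrow> int) set \<Rightarrow> nat \<Rightarrow> nat \<Rightarrow> bool" where
  "rel A a b \<longleftrightarrow> (\<lambda>x. ev a x + ev b x) \<in> A \<or> (\<lambda>x. ev a x - ev b x) \<in> A"

lemma closedA_add: "closedA A \<Longrightarrow> u \<in> A \<Longrightarrow> v \<in> A \<Longrightarrow> (\<lambda>x. u x + v x) \<in> A"
  unfolding closedA_def by blast

lemma closedA_neg: "closedA A \<Longrightarrow> u \<in> A \<Longrightarrow> (\<lambda>x. - u x) \<in> A"
  unfolding closedA_def by blast

lemma closedA_0: "closedA A \<Longrightarrow> (\<lambda>x. 0) \<in> A"
  unfolding closedA_def by blast

lemma closedA_diff: "closedA A \<Longrightarrow> u \<in> A \<Longrightarrow> v \<in> A \<Longrightarrow> (\<lambda>x. u x - v x) \<in> A"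
proof -
  assume c: "closedA A" and u: "u \<in> A" and v: "v \<in> A"
  have "(\<lambda>x. u x + (\<lambda>x. - v x) x) \<in> A" by (rule closedA_add[OF c u closedA_neg[OF c v]])
  then show ?thesis by simp
qed

lemma rel_refl: "closedA A \<Longrightarrow> rel A a a"
  unfolding rel_def using closedA_0 by simp

lemma rel_sym: "closedA A \<Longrightarrow> rel A a b \<Longrightarrow> rel A b a"
proof -
  assume c: "closedA A" and r: "rel A a b"
  have e1: "(\<lambda>x. ev b x + ev a x) = (\<lambda>x. ev a x + ev b x)" by (simp add: add.commute)
  have e2: "(\<lambda>x. ev b x - ev a x) = (\<lambda>x. - (\<lambda>x. ev a x - ev b x) x)" by simp
  show ?thesis using r closedA_neg[OF c, of "\<lambda>x. ev a x - ev b x"] unfolding rel_def e1 e2 by blast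
qed

lemma rel_trans: "closedA A \<Longrightarrow> rel A a b \<Longrightarrow> rel A b c \<Longrightarrow> rel A a c"
proof -
  assume C: "closedA A" and r1: "rel A a b" and r2: "rel A b c"
  have e1: "(\<lambda>x. (\<lambda>x. ev a x + ev b x) x - (\<lambda>x. ev b x + ev c x) x) = (\<lambda>x. ev a x - ev c x)" by auto
  have e2: "(\<lambda>x. (\<lambda>x. ev a x + ev b x) x - (\<lambda>x. ev b x - ev c x) x) = (\<lambda>x. ev a x + ev c x)" by auto
  have e3: "(\<lambda>x. (\<lambda>x. ev a x - ev b x) x + (\<lambda>x. ev b x + ev c x) x) = (\<lambda>x. ev a x + ev c x)" by auto
  have e4: "(\<lambda>x. (\<lambda>x. ev a x - ev b x) x + (\<lambda>x. ev b x - ev c x) x) = (\<lambda>x. ev a x - ev c x)" by auto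
  have "(\<lambda>x. ev a x + ev c x) \<in> A \<or> (\<lambda>x. ev a x - ev c x) \<in> A"
    using r1 r2 unfolding rel_def
  proof (elim disjE)
    assume "(\<lambda>x. ev a x + ev b x) \<in> A" "(\<lambda>x. ev b x + ev c x) \<in> A"
    from closedA_diff[OF C this] show ?thesis unfolding e1 by blast
  next
    assume "(\<lambda>x. ev a x + ev b x) \<in> A" "(\<lambda>x. ev b x - ev c x) \<in> A"
    from closedA_diff[OF C this] show ?thesis unfolding e2 by blast
  next
    assume "(\<lambda>x. ev a x - ev b x) \<in> A" "(\<lambda>x. ev b x + ev c x) \<in> A"
    from closedA_add[OF C this] show ?thesis unfolding e3 by blast
  next
    assume "(\<lambda>x. ev a x - ev b x) \<in> A" "(\<lambda>x. ev b x - ev c x) \<in> A"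
    from closedA_add[OF C this] show ?thesis unfolding e4 by blast
  qed
  then show ?thesis unfolding rel_def .
qed

lemma rel_transfer: "closedA A \<Longrightarrow> ev a \<in> A \<Longrightarrow> rel A a b \<Longrightarrow> ev b \<in> A"
proof -
  assume C: "closedA A" and ea: "ev a \<in> A" and r: "rel A a b"
  have e1: "(\<lambda>x. (\<lambda>x. ev a x + ev b x) x - ev a x) = ev b" by auto
  have e2: "(\<lambda>x. ev a x - (\<lambda>x. ev a x - ev b x) x) = ev b" by auto
  from r show ?thesis unfolding rel_def
  proof
    assume "(\<lambda>x. ev a x + ev b x) \<in> A"
    from closedA_diff[OF C this ea] show ?thesis unfolding e1 .
  next
    assume "(\<lambda>x. ev a x - ev b x) \<in> A"
    from closedA_diff[OF C ea this] show ?thesis unfolding e2 .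
  qed
qed

lemma rel_mono: "A \<subseteq> B \<Longrightarrow> rel A a b \<Longrightarrow> rel B a b"
  unfolding rel_def by blast

definition Ach :: "nat \<Rightarrow> nat \<Rightarrow> (nat \<times> nat \<times> nat) list \<Rightarrow> (nat \<Rightarrow> int) set" where
  "Ach m n ts = {v. \<exists>ds. skel ds = skel ts \<and> (\<forall>(i,j,K)\<in>set ds. K < m) \<and>
                     (\<forall>x\<in>{1..n}. twI ds x mod int m = v x mod int m)}"

lemma zeroK_K: "(i,j,K) \<in> set (zeroK ds) \<Longrightarrow> K = 0"
  unfolding zeroK_def by auto

lemma negK_K: "m \<ge> 1 \<Longrightarrow> (i,j,K) \<in> set (negK m ds) \<Longrightarrow> K < m"
  unfolding negK_def by auto

lemma addK_K: "m \<ge> 1 \<Longrightarrow> (i,j,K) \<in> set (addK m ds es) \<Longrightarrow> K < m"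
  unfolding addK_def by (auto dest!: set_zip_leftD simp: set_zip)

lemma closed_Ach:
  assumes m: "m \<ge> 1"
  shows "closedA (Ach m n ts)"
  unfolding closedA_def
proof (intro conjI ballI)
  show "(\<lambda>x. 0) \<in> Ach m n ts"
    unfolding Ach_def using m by (intro CollectI exI[of _ "zeroK ts"]) (auto simp: twI_zeroK dest: zeroK_K)
next
  fix u v assume u: "u \<in> Ach m n ts" and v: "v \<in> Ach m n ts"
  from u obtain d1 where d1: "skel d1 = skel ts" "\<forall>(i,j,K)\<in>set d1. K < m" "\<forall>x\<in>{1..n}. twI d1 x mod int m = u x mod int m"
    unfolding Ach_def by blast
  from v obtain d2 where d2: "skel d2 = skel ts" "\<forall>(i,j,K)\<in>set d2. K < m" "\<forall>x\<in>{1..n}. twI d2 x mod int m = v x mod int m"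
    unfolding Ach_def by blast
  have sk: "skel d1 = skel d2" using d1 d2 by simp
  note ap = addK_props[OF sk, of m]
  have "twI (addK m d1 d2) x mod int m = (u x + v x) mod int m" if "x \<in> {1..n}" for x
  proof -
    have "twI (addK m d1 d2) x mod int m = (twI d1 x + twI d2 x) mod int m" using ap by blast
    also have "\<dots> = (twI d1 x mod int m + twI d2 x mod int m) mod int m" by (simp add: mod_add_eq)
    also have "\<dots> = (u x mod int m + v x mod int m) mod int m" using d1(3) d2(3) that by simp
    also have "\<dots> = (u x + v x) mod int m" by (simp add: mod_add_eq)
    finally show ?thesis .
  qed
  then show "(\<lambda>x. u x + v x) \<in> Ach m n ts"
    unfolding Ach_def using ap d1(1) addK_K[OF m]
    by (intro CollectI exI[of _ "addK m d1 d2"]) auto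
next
  fix u assume u: "u \<in> Ach m n ts"
  from u obtain d1 where d1: "skel d1 = skel ts" "\<forall>(i,j,K)\<in>set d1. K < m" "\<forall>x\<in>{1..n}. twI d1 x mod int m = u x mod int m"
    unfolding Ach_def by blast
  have "twI (negK m d1) x mod int m = (- u x) mod int m" if "x \<in> {1..n}" for x
  proof -
    have "twI (negK m d1) x mod int m = (- twI d1 x) mod int m" by (rule negK_props[OF d1(2)])
    also have "\<dots> = (- (twI d1 x mod int m)) mod int m" by (simp add: mod_minus_eq)
    also have "\<dots> = (- (u x mod int m)) mod int m" using d1(3) that by simp
    also have "\<dots> = (- u x) mod int m" by (simp add: mod_minus_eq)
    finally show ?thesis .
  qed
  then show "(\<lambda>x. - u x) \<in> Ach m n ts"
    unfolding Ach_def using d1(1) negK_K[OF m]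
    by (intro CollectI exI[of _ "negK m d1"]) auto
qed

lemma Ach_mono: "m \<ge> 1 \<Longrightarrow> Ach m n ts \<subseteq> Ach m n ((i,j,K)#ts)"
proof
  fix v assume "v \<in> Ach m n ts"
  then obtain d where d: "skel d = skel ts" "\<forall>(i,j,K)\<in>set d. K < m" "\<forall>x\<in>{1..n}. twI d x mod int m = v x mod int m"
    unfolding Ach_def by blast
  assume "m \<ge> 1"
  then have "m > 0" by simp
  show "v \<in> Ach m n ((i,j,K)#ts)"
    unfolding Ach_def
  proof (intro CollectI exI[of _ "(i,j,0)#d"] conjI)
    show "skel ((i,j,0)#d) = skel ((i,j,K)#ts)" using d by simp
    show "\<forall>(i',j',K')\<in>set ((i,j,0)#d). K' < m" using d(2) \<open>m > 0\<close> by auto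
    show "\<forall>x\<in>{1..n}. twI ((i,j,0)#d) x mod int m = v x mod int m" using d(3) by simp
  qed
qed

lemma Ach_gen:
  assumes "m \<ge> 1"
  shows "(\<lambda>x. if prm ts x = i \<or> prm ts x = j then 1 else 0) \<in> Ach m n ((i,j,K)#ts)"
  unfolding Ach_def
proof (intro CollectI exI[of _ "(i,j,1 mod m)#zeroK ts"] conjI)
  show "skel ((i,j,1 mod m)#zeroK ts) = skel ((i,j,K)#ts)" by simp
  show "\<forall>(i',j',K')\<in>set ((i,j,1 mod m)#zeroK ts). K' < m" using assms by (auto dest: zeroK_K)
  have pz: "prm (zeroK ts) = prm ts" by (rule prm_skel) simp
  show "\<forall>x\<in>{1..n}. twI ((i,j,1 mod m)#zeroK ts) x mod int m = (if prm ts x = i \<or> prm ts x = j then 1 else 0) mod int m"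
    using pz by (simp add: twI_zeroK zmod_int)
qed

lemma bij_prm: "bij (prm ts)"
proof (induction ts)
  case Nil
  show ?case by (simp only: prm.simps bij_id)
next
  case (Cons a ts)
  obtain i j K where a: "a = (i,j,K)" by (cases a) auto
  have "bij (prm ts \<circ> Transposition.transpose i j)"
    by (rule bij_comp[OF bij_transpose Cons.IH])
  then show ?case using a by (simp only: prm.simps)
qed

lemma step_facts:
  assumes m: "m \<ge> 1" and IH: "\<forall>y. rel (Ach m n ts) (prm ts y) y"
  shows "\<forall>y. rel (Ach m n ((i,j,K)#ts)) (prm ((i,j,K)#ts) y) y"
    and "if i = j then ev j \<in> Ach m n ((i,j,K)#ts) else rel (Ach m n ((i,j,K)#ts)) i j"
proof -
  define A' where "A' = Ach m n ((i,j,K)#ts)"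
  define \<sigma> where "\<sigma> = prm ts"
  have C: "closedA A'" unfolding A'_def by (rule closed_Ach[OF m])
  have sub: "Ach m n ts \<subseteq> A'" unfolding A'_def by (rule Ach_mono[OF m])
  have IH': "rel A' (\<sigma> y) y" for y using rel_mono[OF sub] IH unfolding \<sigma>_def by blast
  have gen: "(\<lambda>x. if \<sigma> x = i \<or> \<sigma> x = j then 1 else 0) \<in> A'"
    unfolding A'_def \<sigma>_def by (rule Ach_gen[OF m])
  have bij: "bij \<sigma>" unfolding \<sigma>_def by (rule bij_prm)
  define y1 where "y1 = inv \<sigma> i"
  define y2 where "y2 = inv \<sigma> j"
  have s1: "\<sigma> x = i \<longleftrightarrow> x = y1" for x unfolding y1_def using bij by (metis bij_inv_eq_iff)
  have s2: "\<sigma> x = j \<longleftrightarrow> x = y2" for x unfolding y2_def using bij by (metis bij_inv_eq_iff)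
  have sy1: "\<sigma> y1 = i" using s1 by simp
  have sy2: "\<sigma> y2 = j" using s2 by simp
  show "if i = j then ev j \<in> A' else rel A' i j"
  proof (cases "i = j")
    case True
    have "(\<lambda>x. if \<sigma> x = i \<or> \<sigma> x = j then 1 else 0) = ev y2"
      unfolding ev_def using True s2 by (auto simp: fun_eq_iff)
    then have "ev y2 \<in> A'" using gen by simp
    moreover have "rel A' y2 j" using rel_sym[OF C IH'[of y2]] sy2 by simp
    ultimately have "ev j \<in> A'" by (rule rel_transfer[OF C])
    then show ?thesis using True by simp
  next
    case False
    have "y1 \<noteq> y2" using False sy1 sy2 by auto
    then have "(\<lambda>x. if \<sigma> x = i \<or> \<sigma> x = j then 1 else 0) = (\<lambda>x. ev y1 x + ev y2 x)"
      unfolding ev_def using s1 s2 by (auto simp: fun_eq_iff)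
    then have "rel A' y1 y2" using gen unfolding rel_def by simp
    moreover have "rel A' i y1" using IH'[of y1] sy1 by simp
    moreover have "rel A' y2 j" using rel_sym[OF C IH'[of y2]] sy2 by simp
    ultimately have "rel A' i j" using rel_trans[OF C] by blast
    then show ?thesis using False by simp
  qed
  then have ij: "rel A' i j" using rel_refl[OF C] by (cases "i = j") auto
  show "\<forall>y. rel A' (prm ((i,j,K)#ts) y) y"
  proof
    fix y
    have p: "prm ((i,j,K)#ts) y = \<sigma> (Transposition.transpose i j y)" unfolding \<sigma>_def by simp
    show "rel A' (prm ((i,j,K)#ts) y) y"
    proof (cases "y = i")
      case True
      have "rel A' (\<sigma> j) j" by (rule IH')
      moreover have "rel A' j i" by (rule rel_sym[OF C ij])
      ultimately show ?thesis using p True rel_trans[OF C] by simp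
    next
      case F1: False
      show ?thesis
      proof (cases "y = j")
        case True
        have "rel A' (\<sigma> i) i" by (rule IH')
        then show ?thesis using p True F1 ij rel_trans[OF C] by simp
      next
        case False
        then show ?thesis using p F1 IH' by simp
      qed
    qed
  qed
qed

lemma J5: "m \<ge> 1 \<Longrightarrow> \<forall>y. rel (Ach m n ts) (prm ts y) y"
proof (induction ts)
  case Nil
  then show ?case using rel_refl[OF closed_Ach] by simp
next
  case (Cons a ts)
  obtain i j K where a: "a = (i,j,K)" by (cases a) auto
  show ?case using step_facts(1)[OF Cons.prems Cons.IH[OF Cons.prems]] a by simp
qed

lemma step_root:
  "m \<ge> 1 \<Longrightarrow> if i = j then ev j \<in> Ach m n ((i,j,K)#ts) else rel (Ach m n ((i,j,K)#ts)) i j"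
  using step_facts(2)[OF _ J5] by blast

lemma Ach_pre: "m \<ge> 1 \<Longrightarrow> Ach m n ts \<subseteq> Ach m n (pre @ ts)"
proof (induction pre)
  case Nil
  then show ?case by simp
next
  case (Cons a pre)
  obtain i j K where a: "a = (i,j,K)" by (cases a) auto
  show ?case using Cons Ach_mono[OF Cons.prems, of n "pre @ ts" i j K] a by auto
qed

lemma all_ev:
  assumes m: "m \<ge> 1" and ts: "ts \<in> trs m w" and w: "set w = {1..n}"
  shows "x \<in> {1..n} \<Longrightarrow> ev x \<in> Ach m n ts"
proof (induction x rule: less_induct)
  case (less x)
  have C: "closedA (Ach m n ts)" by (rule closed_Ach[OF m])
  have "x \<in> set (map (\<lambda>(i,j,K). j) ts)" using ts w less.prems unfolding trs_def by auto
  then obtain t where t: "t \<in> set ts" "(\<lambda>(i,j,K). j) t = x" by auto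
  obtain i K where tt: "t = (i,x,K)" using t(2) by (cases t) auto
  have ix: "1 \<le> i" "i \<le> x" using ts t(1) tt unfolding trs_def by auto
  obtain pre suf where sp: "ts = pre @ t # suf" using split_list[OF t(1)] by blast
  have sub: "Ach m n ((i,x,K)#suf) \<subseteq> Ach m n ts" using Ach_pre[OF m, of n "(i,x,K)#suf" pre] sp tt by simp
  have sr: "if i = x then ev x \<in> Ach m n ((i,x,K)#suf) else rel (Ach m n ((i,x,K)#suf)) i x"
    by (rule step_root[OF m])
  show ?case
  proof (cases "i = x")
    case True
    then show ?thesis using sr sub by auto
  next
    case False
    then have "rel (Ach m n ts) i x" using sr rel_mono[OF sub] by simp
    moreover have "ev i \<in> Ach m n ts" using less.IH[of i] False ix less.prems by auto
    ultimately show ?thesis using rel_transfer[OF C] by blast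
  qed
qed

lemma closedA_smult_nat: "closedA A \<Longrightarrow> u \<in> A \<Longrightarrow> (\<lambda>x. int c * u x) \<in> A"
proof (induction c)
  case 0
  then show ?case using closedA_0 by simp
next
  case (Suc c)
  then have "(\<lambda>x. u x + (\<lambda>x. int c * u x) x) \<in> A" using closedA_add by blast
  then show ?case by (simp add: algebra_simps)
qed

lemma closedA_smult: "closedA A \<Longrightarrow> u \<in> A \<Longrightarrow> (\<lambda>x. c * u x) \<in> A"
proof (cases "c \<ge> 0")
  case True
  assume "closedA A" "u \<in> A"
  then have "(\<lambda>x. int (nat c) * u x) \<in> A" by (rule closedA_smult_nat)
  then show ?thesis using True by simp
next
  case False
  assume C: "closedA A" and u: "u \<in> A"
  then have "(\<lambda>x. int (nat (-c)) * u x) \<in> A" by (rule closedA_smult_nat)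
  then have "(\<lambda>x. - (\<lambda>x. int (nat (-c)) * u x) x) \<in> A" by (rule closedA_neg[OF C])
  then show ?thesis using False by simp
qed

lemma closedA_sum:
  assumes C: "closedA A" and fin: "finite S" and e: "\<forall>x\<in>S. ev x \<in> A"
  shows "(\<lambda>y. \<Sum>x\<in>S. c x * ev x y) \<in> A"
  using fin e
proof (induction S rule: finite_induct)
  case empty
  then show ?case using closedA_0[OF C] by simp
next
  case (insert a S)
  have "(\<lambda>y. (\<lambda>y. c a * ev a y) y + (\<lambda>y. \<Sum>x\<in>S. c x * ev x y) y) \<in> A"
    using insert closedA_smult[OF C] closedA_add[OF C] by simp
  then show ?case using insert by simp
qed

lemma all_in:
  assumes m: "m \<ge> 1" and ts: "ts \<in> trs m w" and w: "set w = {1..n}"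
  shows "v \<in> Ach m n ts"
proof -
  have C: "closedA (Ach m n ts)" by (rule closed_Ach[OF m])
  have "(\<lambda>y. \<Sum>x\<in>{1..n}. v x * ev x y) \<in> Ach m n ts"
    using closedA_sum[OF C] all_ev[OF m ts w] by blast
  then obtain d where d: "skel d = skel ts" "\<forall>(i,j,K)\<in>set d. K < m"
     "\<forall>x\<in>{1..n}. twI d x mod int m = (\<Sum>x'\<in>{1..n}. v x' * ev x' x) mod int m"
    unfolding Ach_def by blast
  have "(\<Sum>x'\<in>{1..n}. v x' * ev x' x) = v x" if "x \<in> {1..n}" for x
  proof -
    have "(\<Sum>x'\<in>{1..n}. v x' * ev x' x) = (\<Sum>x'\<in>{1..n}. if x' = x then v x' else 0)"
      by (intro sum.cong refl) (auto simp: ev_def)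
    also have "\<dots> = v x" using that by (simp add: sum.delta)
    finally show ?thesis .
  qed
  then show ?thesis using d unfolding Ach_def by auto
qed

lemma trs_skel:
  assumes "skel b = skel a" "a \<in> trs m w" "\<forall>(i,j,K)\<in>set b. K < m"
  shows "b \<in> trs m w"
  using assms
proof (induction a arbitrary: b w)
  case Nil
  then have "b = []" by (metis skel_Nil_iff)
  then show ?case using Nil by simp
next
  case (Cons t a)
  obtain i j K where t: "t = (i,j,K)" by (cases t) auto
  have "skel b = (i,j) # skel a" using Cons.prems t by simp
  then obtain K' b' where b: "b = (i,j,K')#b'" "skel b' = skel a"
    unfolding skel_Cons_iff by blast
  have w: "w = j # map (\<lambda>(i,j,K). j) a" and ij: "1 \<le> i" "i \<le> j" and a: "a \<in> trs m (map (\<lambda>(i,j,K). j) a)"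
    using Cons.prems(2) t unfolding trs_def by auto
  have "b' \<in> trs m (map (\<lambda>(i,j,K). j) a)" using Cons.IH[OF b(2) a] Cons.prems(3) b by auto
  then show ?case using w ij b Cons.prems(3) unfolding trs_def by auto
qed

lemma mod_cancel_lt:
  fixes K1 K2 K m :: nat
  assumes "K1 < m" "K2 < m" "(K1 + K) mod m = (K2 + K) mod m"
  shows "K1 = K2"
proof (rule ccontr)
  assume ne: "K1 \<noteq> K2"
  have "int ((K1 + K) mod m) = int ((K2 + K) mod m)" using assms(3) by simp
  then have "(int K1 + int K) mod int m = (int K2 + int K) mod int m" by (simp add: zmod_int)
  then have "int m dvd (int K1 + int K - (int K2 + int K))" by (simp only: mod_eq_dvd_iff)
  then have d: "int m dvd (int K1 - int K2)" by simp
  have "int K1 - int K2 \<noteq> 0" using ne by simp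
  then have "\<bar>int m\<bar> \<le> \<bar>int K1 - int K2\<bar>" using d by (rule dvd_imp_le_int)
  then show False using assms(1,2) by simp
qed

lemma addK_cancel:
  assumes "skel ts1 = skel E" "skel ts2 = skel E" "\<forall>(i,j,K)\<in>set ts1. K < m" "\<forall>(i,j,K)\<in>set ts2. K < m"
    "addK m ts1 E = addK m ts2 E"
  shows "ts1 = ts2"
  using assms
proof (induction E arbitrary: ts1 ts2)
  case Nil
  then show ?case by (metis skel_Nil_iff)
next
  case (Cons e E)
  obtain i j K where e: "e = (i,j,K)" by (cases e) auto
  have "skel ts1 = (i,j) # skel E" using Cons.prems e by simp
  then obtain K1 t1 where t1: "ts1 = (i,j,K1)#t1" "skel t1 = skel E" unfolding skel_Cons_iff by blast
  have "skel ts2 = (i,j) # skel E" using Cons.prems e by simp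
  then obtain K2 t2 where t2: "ts2 = (i,j,K2)#t2" "skel t2 = skel E" unfolding skel_Cons_iff by blast
  have eq: "(K1 + K) mod m = (K2 + K) mod m" "addK m t1 E = addK m t2 E"
    using Cons.prems(5) t1 t2 e by auto
  have "K1 < m" "K2 < m" using Cons.prems(3,4) t1 t2 by auto
  then have "K1 = K2" using eq(1) by (rule mod_cancel_lt)
  moreover have "t1 = t2" using Cons.IH[OF t1(2) t2(2) _ _ eq(2)] Cons.prems(3,4) t1 t2 by auto
  ultimately show ?case using t1 t2 by simp
qed

lemma card_filter_sum: "finite A \<Longrightarrow> real (card {x\<in>A. P x}) = (\<Sum>x\<in>A. if P x then 1 else 0)"
  by (simp add: sum.inter_filter[symmetric])

lemma run_eq_iff:
  assumes m: "m \<ge> 1" and k: "k \<in> Vt m n"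
  shows "run m n ts = (k, \<sigma>) \<longleftrightarrow> prm ts = \<sigma> \<and> (\<forall>x\<in>{1..n}. twI ts x mod int m = int (k x))"
proof -
  have "run m n ts = (k, \<sigma>) \<longleftrightarrow> snd (run m n ts) = \<sigma> \<and> (\<forall>x. fst (run m n ts) x = k x)"
    by (metis prod.collapse prod.inject ext)
  also have "(\<forall>x. fst (run m n ts) x = k x) \<longleftrightarrow> (\<forall>x\<in>{1..n}. twI ts x mod int m = int (k x))"
  proof -
    have "fst (run m n ts) x = k x \<longleftrightarrow> (x \<in> {1..n} \<longrightarrow> twI ts x mod int m = int (k x))" for x
    proof (cases "x \<in> {1..n}")
      case True
      have nn: "twI ts x mod int m \<ge> 0" using m by simp
      have "fst (run m n ts) x = nat (twI ts x mod int m)" using fst_run[OF m] True by simp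
      then show ?thesis using True nn by auto
    next
      case False
      have f0: "fst (run m n ts) x = 0" by (simp only: fst_run[OF m] if_not_P[OF False])
      have k0: "k x = 0" using k False unfolding Vt_def by blast
      show ?thesis using False by (auto simp: f0 k0)
    qed
    then show ?thesis by auto
  qed
  finally show ?thesis by (simp add: snd_run)
qed

lemma fib_le:
  assumes m: "m \<ge> 1" and w: "set w = {1..n}" and k: "k \<in> Vt m n" and k': "k' \<in> Vt m n"
  shows "card {ts\<in>trs m w. run m n ts = (k,\<sigma>)} \<le> card {ts\<in>trs m w. run m n ts = (k',\<sigma>)}"
proof -
  define d where "d = (\<lambda>x. int (k' x) - int (k x))"
  define PD where "PD = (\<lambda>p ds. skel ds = p \<and> (\<forall>(i,j,K)\<in>set ds. K < m) \<and> (\<forall>x\<in>{1..n}. twI ds x mod int m = d x mod int m))"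
  define D where "D = (\<lambda>p. SOME ds. PD p ds)"
  define h where "h = (\<lambda>ts. addK m ts (D (skel ts)))"
  have PDts: "PD (skel ts) (D (skel ts))" if "ts \<in> trs m w" for ts
  proof -
    have "d \<in> Ach m n ts" by (rule all_in[OF m that w])
    then have "\<exists>ds. PD (skel ts) ds" unfolding Ach_def PD_def by auto
    then show ?thesis unfolding D_def by (rule someI_ex)
  qed
  let ?F = "{ts\<in>trs m w. run m n ts = (k,\<sigma>)}"
  let ?F' = "{ts\<in>trs m w. run m n ts = (k',\<sigma>)}"
  have Kts: "\<forall>(i,j,K)\<in>set ts. K < m" if "ts \<in> trs m w" for ts using that unfolding trs_def by auto
  have hprops: "skel (h ts) = skel ts \<and> (\<forall>x. twI (h ts) x mod int m = (twI ts x + twI (D (skel ts)) x) mod int m)"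
    if "ts \<in> trs m w" for ts
    unfolding h_def by (rule addK_props) (use PDts[OF that] in \<open>simp add: PD_def\<close>)
  have inj: "inj_on h ?F"
  proof (rule inj_onI)
    fix t1 t2 assume t1: "t1 \<in> ?F" and t2: "t2 \<in> ?F" and eq: "h t1 = h t2"
    have t1': "t1 \<in> trs m w" and t2': "t2 \<in> trs m w" using t1 t2 by auto
    have "skel t1 = skel t2" using hprops[OF t1'] hprops[OF t2'] eq by metis
    then have eq2: "addK m t1 (D (skel t1)) = addK m t2 (D (skel t1))" using eq unfolding h_def by simp
    have sD: "skel (D (skel t1)) = skel t1" using PDts[OF t1'] unfolding PD_def by simp
    show "t1 = t2"
      by (rule addK_cancel[OF sD[symmetric] _ Kts[OF t1'] Kts[OF t2'] eq2]) (use sD \<open>skel t1 = skel t2\<close> in simp)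
  qed
  have sub: "h ` ?F \<subseteq> ?F'"
  proof
    fix y assume "y \<in> h ` ?F"
    then obtain ts where ts: "ts \<in> ?F" and y: "y = h ts" by auto
    have tsT: "ts \<in> trs m w" using ts by simp
    have hp: "skel (h ts) = skel ts" "\<And>x. twI (h ts) x mod int m = (twI ts x + twI (D (skel ts)) x) mod int m"
      using hprops[OF tsT] by auto
    have Dp: "\<forall>x\<in>{1..n}. twI (D (skel ts)) x mod int m = d x mod int m" using PDts[OF tsT] unfolding PD_def by simp
    have hK: "\<forall>(i,j,K)\<in>set (h ts). K < m" unfolding h_def using addK_K[OF m] by blast
    have hT: "h ts \<in> trs m w" by (rule trs_skel[OF hp(1) tsT hK])
    have r: "prm ts = \<sigma> \<and> (\<forall>x\<in>{1..n}. twI ts x mod int m = int (k x))"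
      using ts run_eq_iff[OF m k] by simp
    have "prm (h ts) = \<sigma>" using prm_skel[OF hp(1)] r by simp
    moreover have "twI (h ts) x mod int m = int (k' x)" if x: "x \<in> {1..n}" for x
    proof -
      have "twI (h ts) x mod int m = (twI ts x + twI (D (skel ts)) x) mod int m" by (rule hp(2))
      also have "\<dots> = (twI ts x mod int m + twI (D (skel ts)) x mod int m) mod int m" by (simp add: mod_add_eq)
      also have "\<dots> = (int (k x) + d x mod int m) mod int m" using r Dp x by simp
      also have "\<dots> = (int (k x) + d x) mod int m" by (simp add: mod_add_right_eq)
      also have "\<dots> = int (k' x) mod int m" unfolding d_def by simp
      also have "\<dots> = int (k' x)" using k' x unfolding Vt_def by simp
      finally show ?thesis .
    qed
    ultimately have "run m n (h ts) = (k',\<sigma>)" using run_eq_iff[OF m k'] by simp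
    then show "y \<in> ?F'" using y hT by simp
  qed
  have fin: "finite ?F'" using finite_trs by simp
  show ?thesis by (rule card_inj_on_le[OF inj sub fin])
qed

lemma core:
  assumes m: "m \<ge> 1" and w: "set w = {1..n}" and g: "g \<in> gsym m n"
  shows "real (card (gsym m n)) * (\<Sum>ts\<in>trs m w. if run m n ts = g then 1 else 0) = real (card (trs m w))"
proof -
  let ?T = "trs m w"
  define S where "S = (\<lambda>g. (\<Sum>ts\<in>?T. if run m n ts = g then 1 else 0 :: real))"
  have S_card: "S g = real (card {ts\<in>?T. run m n ts = g})" for g
    unfolding S_def by (rule card_filter_sum[symmetric, OF finite_trs])
  have wn: "set w \<subseteq> {1..n}" using w by simp
  have runin: "run m n ts \<in> gsym m n" if "ts \<in> ?T" for ts by (rule run_in[OF that wn m])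
  have eqk: "S (k,\<sigma>) = S (k',\<sigma>)" if "k \<in> Vt m n" "k' \<in> Vt m n" for k k' \<sigma>
    unfolding S_card using fib_le[OF m w that] fib_le[OF m w that(2,1)] by (simp add: le_antisym)
  have sumk: "(\<Sum>k\<in>Vt m n. S (k,\<sigma>)) = real (cP m w \<sigma>)" for \<sigma>
  proof -
    have "(\<Sum>k\<in>Vt m n. S (k,\<sigma>)) = (\<Sum>ts\<in>?T. \<Sum>k\<in>Vt m n. if run m n ts = (k,\<sigma>) then 1 else 0)"
      unfolding S_def by (rule sum.swap)
    also have "\<dots> = (\<Sum>ts\<in>?T. if prm ts = \<sigma> then 1 else 0)"
    proof (rule sum.cong[OF refl])
      fix ts assume ts: "ts \<in> ?T"
      have f: "fst (run m n ts) \<in> Vt m n" using runin[OF ts] unfolding gsym_eq by auto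
      have "(\<Sum>k\<in>Vt m n. if run m n ts = (k,\<sigma>) then 1 else 0 :: real)
          = (\<Sum>k\<in>Vt m n. if fst (run m n ts) = k then (if prm ts = \<sigma> then 1 else 0) else 0)"
        by (intro sum.cong refl) (auto simp: snd_run prod_eq_iff)
      also have "\<dots> = (if prm ts = \<sigma> then 1 else 0)" using f finite_Vt by (simp add: sum.delta)
      finally show "(\<Sum>k\<in>Vt m n. if run m n ts = (k,\<sigma>) then 1 else 0 :: real) = (if prm ts = \<sigma> then 1 else 0)" .
    qed
    also have "\<dots> = real (cP m w \<sigma>)" unfolding cP_def of_nat_sum by (intro sum.cong refl) simp
    finally show ?thesis .
  qed
  obtain C where C: "\<And>\<sigma>. \<sigma> permutes {1..n} \<Longrightarrow> cP m w \<sigma> = C" using cP_const[OF w, of m] by blast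
  have z: "(\<lambda>x. 0) \<in> Vt m n" using m unfolding Vt_def by auto
  have cardV: "card (Vt m n) > 0" using z finite_Vt card_gt_0_iff by blast
  have val: "real (card (Vt m n)) * S g' = real C" if g'in: "g' \<in> gsym m n" for g'
  proof -
    obtain k \<sigma> where g': "g' = (k,\<sigma>)" "k \<in> Vt m n" "\<sigma> permutes {1..n}"
      using g'in unfolding gsym_eq Perms_def by (cases g') auto
    have "real (card (Vt m n)) * S g' = (\<Sum>k'\<in>Vt m n. S (k',\<sigma>))"
      using eqk[OF _ g'(2)] g'(1) by simp
    also have "\<dots> = real C" using sumk C[OF g'(3)] by simp
    finally show ?thesis .
  qed
  have nz: "real (card (Vt m n)) \<noteq> 0" using cardV by simp
  have const: "S g' = S g" if g'in: "g' \<in> gsym m n" for g'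
  proof -
    have "real (card (Vt m n)) * S g' = real (card (Vt m n)) * S g" using val[OF g'in] val[OF g] by simp
    then show ?thesis using nz by (metis mult_cancel_left)
  qed
  have "(\<Sum>g'\<in>gsym m n. S g') = real (card ?T)"
  proof -
    have "(\<Sum>g'\<in>gsym m n. S g') = (\<Sum>ts\<in>?T. \<Sum>g'\<in>gsym m n. if run m n ts = g' then 1 else 0)"
      unfolding S_def by (rule sum.swap)
    also have "\<dots> = (\<Sum>ts\<in>?T. 1)"
      by (intro sum.cong refl) (use runin finite_gsym in \<open>simp add: sum.delta\<close>)
    finally show ?thesis by simp
  qed
  moreover have "(\<Sum>g'\<in>gsym m n. S g') = real (card (gsym m n)) * S g"
    using const by simp
  ultimately show ?thesis unfolding S_def by simp
qed

lemma card_trs: "real (card (trs m w)) = prod_list (map (\<lambda>j. real j * real m) w)"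
proof (induction w)
  case Nil
  then show ?case by (simp add: trs_Nil)
next
  case (Cons j w)
  have "card (trs m (j#w)) = (\<Sum>ts\<in>trs m (j#w). 1)" by simp
  also have "\<dots> = (\<Sum>i\<in>{1..j}. \<Sum>K\<in>{0..<m}. \<Sum>ts\<in>trs m w. (1::nat))" by (rule sum_trs_Cons)
  also have "\<dots> = j * (m * card (trs m w))" by simp
  finally have "real (card (trs m (j#w))) = real j * real m * real (card (trs m w))" by simp
  then show ?case using Cons by simp
qed

lemma wtw_card:
  assumes "m \<ge> 1" "n \<ge> 1" "w \<in> W n t"
  shows "wtw n m w * real (card (trs m w)) = (1 / real n) ^ t"
  using assms(3)
proof (induction w arbitrary: t)
  case Nil
  then show ?case by (simp add: W_def wtw_def trs_Nil)
next
  case (Cons j w)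
  then obtain t' where t: "t = Suc t'" and w: "w \<in> W n t'" and j: "1 \<le> j"
    unfolding W_def by (cases t) auto
  have "wtw n m (j#w) * real (card (trs m (j#w)))
      = (1 / (real n * real j * real m) * (real j * real m)) * (wtw n m w * real (card (trs m w)))"
    unfolding wtw_def card_trs by simp
  also have "1 / (real n * real j * real m) * (real j * real m) = 1 / real n"
    using j assms(1) by (simp add: field_simps)
  also have "wtw n m w * real (card (trs m w)) = (1 / real n) ^ t'" by (rule Cons.IH[OF w])
  finally show ?case using t by simp
qed

definition Cov :: "nat \<Rightarrow> nat \<Rightarrow> nat list set" where
  "Cov n t = {w \<in> W n t. set w = {1..n}}"

lemma lower_bound:
  assumes m: "m \<ge> 1" and n: "n \<ge> 1" and g: "g \<in> gsym m n"
  shows "gconv_pow m n (OST m n) t g \<ge> real (card (Cov n t)) * (1 / real n) ^ t / real (card (gsym m n))"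
proof -
  define S where "S = (\<lambda>w. (\<Sum>ts\<in>trs m w. if run m n ts = g then 1 else 0 :: real))"
  have cg: "real (card (gsym m n)) > 0" using finite_gsym gunit_in[OF m] card_gt_0_iff by fastforce
  have nn: "0 \<le> wtw n m w * S w" for w
    unfolding wtw_def S_def by (intro mult_nonneg_nonneg prod_list_nonneg sum_nonneg) auto
  have "gconv_pow m n (OST m n) t g = (\<Sum>w\<in>W n t. wtw n m w * S w)"
    unfolding S_def by (rule pow_traj[OF m])
  also have "\<dots> \<ge> (\<Sum>w\<in>Cov n t. wtw n m w * S w)"
    by (rule sum_mono2[OF finite_W]) (auto simp: Cov_def nn)
  moreover have "(\<Sum>w\<in>Cov n t. wtw n m w * S w) = (\<Sum>w\<in>Cov n t. (1 / real n) ^ t / real (card (gsym m n)))"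
  proof (rule sum.cong[OF refl])
    fix w assume w: "w \<in> Cov n t"
    have "real (card (gsym m n)) * S w = real (card (trs m w))"
      unfolding S_def by (rule core[OF m _ g]) (use w in \<open>simp add: Cov_def\<close>)
    then have "S w = real (card (trs m w)) / real (card (gsym m n))" using cg by (simp add: field_simps)
    then have "wtw n m w * S w = (wtw n m w * real (card (trs m w))) / real (card (gsym m n))" by simp
    also have "\<dots> = (1 / real n) ^ t / real (card (gsym m n))"
      using wtw_card[OF m n] w by (simp add: Cov_def)
    finally show "wtw n m w * S w = (1 / real n) ^ t / real (card (gsym m n))" .
  qed
  ultimately show ?thesis by simp
qed

lemma card_W: "card (W n t) = n ^ t"
  unfolding W_def using card_lists_length_eq[of "{1..n}" t] by simp

lemma card_nonCov: "card (W n t - Cov n t) \<le> n * (n - 1) ^ t"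
proof -
  have sub: "W n t - Cov n t \<subseteq> (\<Union>x\<in>{1..n}. {w. set w \<subseteq> {1..n} - {x} \<and> length w = t})"
    unfolding W_def Cov_def by auto
  have "card (W n t - Cov n t) \<le> card (\<Union>x\<in>{1..n}. {w. set w \<subseteq> {1..n} - {x} \<and> length w = t})"
    by (rule card_mono[OF _ sub]) (auto intro!: finite_lists_length_eq)
  also have "\<dots> \<le> (\<Sum>x\<in>{1..n}. card {w. set w \<subseteq> {1..n} - {x} \<and> length w = t})"
    by (rule card_UN_le) simp
  also have "\<dots> = (\<Sum>x\<in>{1..n}. (n - 1) ^ t)"
    by (intro sum.cong refl) (simp add: card_lists_length_eq)
  also have "\<dots> = n * (n - 1) ^ t" by simp
  finally show ?thesis .
qed

lemma sep_bound:
  assumes m: "m \<ge> 1" and n: "n \<ge> 1"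
  shows "sep_dist m n (gconv_pow m n (OST m n) t) \<le> real n * (1 - 1 / real n) ^ t"
proof -
  let ?q = "real (card (Cov n t)) * (1 / real n) ^ t"
  have cg: "real (card (gsym m n)) > 0" using finite_gsym gunit_in[OF m] card_gt_0_iff by fastforce
  have ratio: "gconv_pow m n (OST m n) t g / Unif m n g \<ge> ?q" if g: "g \<in> gsym m n" for g
  proof -
    have "gconv_pow m n (OST m n) t g / Unif m n g = gconv_pow m n (OST m n) t g * real (card (gsym m n))"
      unfolding Unif_def by simp
    also have "\<dots> \<ge> ?q / real (card (gsym m n)) * real (card (gsym m n))"
      using lower_bound[OF m n g, of t] cg by (intro mult_right_mono) auto
    ultimately show ?thesis using cg by simp
  qed
  have "Min ((\<lambda>g. gconv_pow m n (OST m n) t g / Unif m n g) ` gsym m n) \<ge> ?q"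
  proof -
    have ne: "gsym m n \<noteq> {}" using gunit_in[OF m] by blast
    show ?thesis using ratio ne by (subst Min_ge_iff[OF finite_imageI[OF finite_gsym]]) auto
  qed
  then have "sep_dist m n (gconv_pow m n (OST m n) t) \<le> 1 - ?q" unfolding sep_dist_def by simp
  also have "1 - ?q \<le> real n * (1 - 1 / real n) ^ t"
  proof -
    have cs: "Cov n t \<subseteq> W n t" unfolding Cov_def by blast
    have fc: "finite (Cov n t)" by (rule finite_subset[OF cs finite_W])
    have "card (W n t - Cov n t) = card (W n t) - card (Cov n t)" by (rule card_Diff_subset[OF fc cs])
    moreover have "card (Cov n t) \<le> card (W n t)" by (rule card_mono[OF finite_W cs])
    ultimately have cW: "card (Cov n t) + card (W n t - Cov n t) = n ^ t"
      using card_W[of n t] by simp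
    have "real (card (Cov n t)) \<ge> real n ^ t - real n * (real n - 1) ^ t"
    proof -
      have "real (card (W n t - Cov n t)) \<le> real (n * (n - 1) ^ t)" using card_nonCov by (simp only: of_nat_le_iff)
      then have "real (card (W n t - Cov n t)) \<le> real n * (real n - 1) ^ t" using n by (simp add: of_nat_diff)
      moreover have "real (card (Cov n t)) + real (card (W n t - Cov n t)) = real n ^ t"
        using cW by (metis of_nat_add of_nat_power)
      ultimately show ?thesis by linarith
    qed
    then have "?q \<ge> (real n ^ t - real n * (real n - 1) ^ t) * (1 / real n) ^ t"
      by (intro mult_right_mono) auto
    also have "(real n ^ t - real n * (real n - 1) ^ t) * (1 / real n) ^ t = 1 - real n * (1 - 1 / real n) ^ t"
    proof -
      have "real n ^ t * (1 / real n) ^ t = (real n * (1 / real n)) ^ t" by (rule power_mult_distrib[symmetric])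
      also have "real n * (1 / real n) = 1" using n by simp
      finally have a: "real n ^ t * (1 / real n) ^ t = 1" by simp
      have "(real n - 1) ^ t * (1 / real n) ^ t = ((real n - 1) * (1 / real n)) ^ t" by (rule power_mult_distrib[symmetric])
      also have "(real n - 1) * (1 / real n) = 1 - 1 / real n" using n by (simp add: field_simps)
      finally have b: "(real n - 1) ^ t * (1 / real n) ^ t = (1 - 1 / real n) ^ t" .
      have "(real n ^ t - real n * (real n - 1) ^ t) * (1 / real n) ^ t
          = real n ^ t * (1 / real n) ^ t - real n * ((real n - 1) ^ t * (1 / real n) ^ t)"
        by (simp only: left_diff_distrib mult.assoc)
      then show ?thesis unfolding a b .
    qed
    finally show ?thesis by simp
  qed
  finally show ?thesis .
qed

lemma asym:
  fixes c :: real
  assumes c: "c > 0" and n: "n \<ge> 1"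
  shows "real n * (1 - 1 / real n) ^ (nat \<lfloor>real n * ln (real n) + c * real n\<rfloor>) \<le> exp (- c) * exp (1 / real n)"
proof -
  define x where "x = real n * ln (real n) + c * real n"
  define t where "t = nat \<lfloor>x\<rfloor>"
  have rn: "real n \<ge> 1" using n by simp
  have x0: "x \<ge> 0" unfolding x_def using c rn by (intro add_nonneg_nonneg mult_nonneg_nonneg) auto
  have tx: "real t \<ge> x - 1" unfolding t_def using x0 by linarith
  have b0: "0 \<le> 1 - 1 / real n" using rn by (simp add: field_simps)
  have b1: "1 - 1 / real n \<le> exp (- (1 / real n))" using exp_ge_add_one_self[of "- (1 / real n)"] by simp
  have "(1 - 1 / real n) ^ t \<le> exp (- (1 / real n)) ^ t" by (rule power_mono[OF b1 b0])
  also have "\<dots> = exp (real t * (- (1 / real n)))" by (rule exp_of_nat_mult[symmetric])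
  also have "\<dots> \<le> exp ((x - 1) * (- (1 / real n)))"
    using tx rn by (intro exp_le_cancel_iff[THEN iffD2] mult_right_mono_neg) auto
  also have "(x - 1) * (- (1 / real n)) = - ln (real n) - c + 1 / real n"
    unfolding x_def using rn by (simp add: field_simps)
  also have "exp (- ln (real n) - c + 1 / real n) = exp (- c) * exp (1 / real n) / real n"
  proof -
    have "exp (- ln (real n) - c + 1 / real n) = exp (- ln (real n)) * exp (- c) * exp (1 / real n)"
      by (simp only: diff_conv_add_uminus exp_add)
    also have "exp (- ln (real n)) = 1 / real n" using rn by (simp add: exp_minus inverse_eq_divide)
    finally show ?thesis by simp
  qed
  finally have "(1 - 1 / real n) ^ t \<le> exp (- c) * exp (1 / real n) / real n" .
  then have "real n * (1 - 1 / real n) ^ t \<le> real n * (exp (- c) * exp (1 / real n) / real n)"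
    using rn by (intro mult_left_mono) auto
  also have "\<dots> = exp (- c) * exp (1 / real n)" using rn by simp
  finally show ?thesis unfolding t_def x_def .
qed

theorem proposition4p8:
  fixes m :: nat and c :: real
  assumes "m \<ge> 1" and "c > 0"
  shows "limsup (\<lambda>n. ereal (sep_dist m n
            (gconv_pow m n (OST m n) (nat \<lfloor>real n * ln (real n) + c * real n\<rfloor>))))
         \<le> ereal (exp (- c))"
proof -
  let ?f = "\<lambda>n. ereal (sep_dist m n (gconv_pow m n (OST m n) (nat \<lfloor>real n * ln (real n) + c * real n\<rfloor>)))"
  let ?g = "\<lambda>n. ereal (exp (- c) * exp (1 / real n))"
  have ev: "eventually (\<lambda>n. ?f n \<le> ?g n) sequentially"
    unfolding eventually_sequentially
  proof (intro exI[of _ 1] allI impI)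
    fix n :: nat assume n: "n \<ge> 1"
    have "sep_dist m n (gconv_pow m n (OST m n) (nat \<lfloor>real n * ln (real n) + c * real n\<rfloor>))
        \<le> real n * (1 - 1 / real n) ^ (nat \<lfloor>real n * ln (real n) + c * real n\<rfloor>)"
      by (rule sep_bound[OF assms(1) n])
    also have "\<dots> \<le> exp (- c) * exp (1 / real n)" by (rule asym[OF assms(2) n])
    finally show "?f n \<le> ?g n" by simp
  qed
  have lim: "(?g \<longlongrightarrow> ereal (exp (- c))) sequentially"
  proof -
    have "((\<lambda>n. exp (- c) * exp (1 / real n)) \<longlongrightarrow> exp (- c) * exp 0) sequentially"
      by (intro tendsto_mult tendsto_const tendsto_exp lim_1_over_n)
    then show ?thesis by (intro tendsto_ereal) simp
  qed
  have "limsup ?f \<le> limsup ?g" by (rule Limsup_mono[OF ev])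
  also have "limsup ?g = ereal (exp (- c))" by (rule lim_imp_Limsup[OF trivial_limit_sequentially lim])
  finally show ?thesis .
qed

end
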